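(* Let $p\in(0,1)$, $\beta>0$, $\mu_P,\mu_N\in\mathbb R^d$ with $\mu_{pn}:=\mu_P-\mu_N\neq 0$, and let $\Sigma_P$ be symmetric positive semidefinite and $\Sigma_N$ symmetric positive definite $d\times d$ matrices. Let $\pi(\alpha)=\sqrt{(1-\alpha)/\alpha}$ for $\alpha\in(0,1)$ and $Q_F(\alpha_P,\alpha_N)=\frac{(1-p)\alpha_N+\beta^2p\alpha_P}{1-\alpha_P}$. Consider sequences generated as follows (the alternating descent scheme of the MPMF algorithm): start with $w_1=\mu_{pn}/\|\mu_{pn}\|$; at round $t$, given a unit vector $w_t$ with $C_t:=w_t^T\mu_{pn}>0$, set $A_t=\sqrt{w_t^T\Sigma_P w_t}$, $B_t=\sqrt{w_t^T\Sigma_N w_t}$, and let $(\alpha_{P,t},\alpha_{N,t})$ be a minimizer of $Q_F(\alpha_P,\alpha_N)$ over $\{(\alpha_P,\alpha_N)\in(0,1)^2:\ \pi(\alpha_N)B_t+\pi(\alpha_P)A_t=C_t\}$ (assumed to exist); set $\tau_t=\pi(\alpha_{P,t})$, $\lambda_t(w)=\frac{w^T\mu_{pn}-\tau_t\sqrt{w^T\Sigma_P w}}{\sqrt{w^T\Sigma_N w}}$, $\eta_t=\lambda_t(w_t)$, and choose a unit vector $w_{t+1}$ with $\lambda_t(w_{t+1})\ge\eta_t$ (either $w_{t+1}=w_t$, or a unit vector with $f_t(w_{t+1})\ge 0$ where $f_t(w)=w^T\mu_{pn}-\tau_t\sqrt{w^T\Sigma_P w}-\eta_t\sqrt{w^T\Sigma_N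 w}$). Then the sequence of objective values $Q_F(\alpha_{P,t},\alpha_{N,t})$ is monotonically non-increasing in $t$ and converges.
   Context: This is the minimax probability machine for the $F_\beta$ measure (MPMF): the problem is $\min_{\alpha_P,\alpha_N,w} \frac{(1-p)\alpha_N+\beta^2p\alpha_P}{1-\alpha_P}$ subject to $\|w\|=1$ and $\pi(\alpha_N)\sqrt{w^T\Sigma_N w}+\pi(\alpha_P)\sqrt{w^T\Sigma_P w}=w^T\mu_{pn}$, where $\mu_P,\Sigma_P$ ($\mu_N,\Sigma_N$) are the mean and covariance of the positive (negative) class, $p$ the positive class proportion, and $\alpha_P,\alpha_N$ worst-case false negative and false positive rates. The algorithm alternates between minimizing over $(\alpha_P,\alpha_N)$ for fixed $w$ and, for fixed $\alpha_P$, improving $w$ so as to decrease $\alpha_N$ (the new value being $\alpha_{N,t}'=1/(1+\lambda_t(w_{t+1})^2)$). *)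

theory Defs
  imports "HOL-Analysis.Analysis"
begin

definition mpm_pi :: "real \<Rightarrow> real" where
  "mpm_pi \<alpha> = sqrt ((1 - \<alpha>) / \<alpha>)"

definition QF :: "real \<Rightarrow> real \<Rightarrow> real \<Rightarrow> real \<Rightarrow> real" where
  "QF p \<beta> \<alpha>P \<alpha>N = ((1 - p) * \<alpha>N + \<beta>\<^sup>2 * p * \<alpha>P) / (1 - \<alpha>P)"

definition qnorm :: "real^'d^'d \<Rightarrow> real^'d \<Rightarrow> real" where
  "qnorm S w = sqrt (w \<bullet> (S *v w))"

definition sym_psd :: "real^'d^'d \<Rightarrow> bool" where
  "sym_psd S \<longleftrightarrow> transpose S = S \<and> (\<forall>x. 0 \<le> x \<bullet> (S *v x))"

definition sym_pd :: "real^'d^'d \<Rightarrow> bool" where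
  "sym_pd S \<longleftrightarrow> transpose S = S \<and> (\<forall>x. x \<noteq> 0 \<longrightarrow> 0 < x \<bullet> (S *v x))"

definition lam :: "real^'d \<Rightarrow> real^'d^'d \<Rightarrow> real^'d^'d \<Rightarrow> real \<Rightarrow> real^'d \<Rightarrow> real" where
  "lam \<mu> SP SN \<tau> w = (w \<bullet> \<mu> - \<tau> * qnorm SP w) / qnorm SN w"

end

theory Submission
  imports Defs
begin

theorem theorem1:
  fixes p \<beta> :: real
    and \<mu>P \<mu>N :: "real^'d"
    and \<Sigma>P \<Sigma>N :: "real^'d^'d"
    and w :: "nat \<Rightarrow> real^'d"
    and aP aN :: "nat \<Rightarrow> real"
  assumes p: "0 < p" "p < 1"
    and beta: "0 < \<beta>"
    and mu: "\<mu>P - \<mu>N \<noteq> 0"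
    and SP: "sym_psd \<Sigma>P"
    and SN: "sym_pd \<Sigma>N"
    and w1: "w 1 = (1 / norm (\<mu>P - \<mu>N)) *\<^sub>R (\<mu>P - \<mu>N)"
    and wunit: "\<And>t. t \<ge> 1 \<Longrightarrow> norm (w t) = 1"
    and a_range: "\<And>t. t \<ge> 1 \<Longrightarrow> 0 < aP t \<and> aP t < 1 \<and> 0 < aN t \<and> aN t < 1"
    and a_feas: "\<And>t. t \<ge> 1 \<Longrightarrow>
        mpm_pi (aN t) * qnorm \<Sigma>N (w t) + mpm_pi (aP t) * qnorm \<Sigma>P (w t) = w t \<bullet> (\<mu>P - \<mu>N)"
    and a_min: "\<And>t a b. t \<ge> 1 \<Longrightarrow> 0 < a \<Longrightarrow> a < 1 \<Longrightarrow> 0 < b \<Longrightarrow> b < 1 \<Longrightarrow>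
        mpm_pi b * qnorm \<Sigma>N (w t) + mpm_pi a * qnorm \<Sigma>P (w t) = w t \<bullet> (\<mu>P - \<mu>N) \<Longrightarrow>
        QF p \<beta> (aP t) (aN t) \<le> QF p \<beta> a b"
    and w_step: "\<And>t. t \<ge> 1 \<Longrightarrow>
        lam (\<mu>P - \<mu>N) \<Sigma>P \<Sigma>N (mpm_pi (aP t)) (w (t + 1))
          \<ge> lam (\<mu>P - \<mu>N) \<Sigma>P \<Sigma>N (mpm_pi (aP t)) (w t)"
  shows "(\<forall>t\<ge>1. QF p \<beta> (aP (t + 1)) (aN (t + 1)) \<le> QF p \<beta> (aP t) (aN t))
         \<and> convergent (\<lambda>t. QF p \<beta> (aP t) (aN t))"
proof -
  let ?mu = "\<mu>P - \<mu>N"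
  let ?Q = "\<lambda>t. QF p \<beta> (aP t) (aN t)"
  have qpos: "qnorm \<Sigma>N (w t) > 0" if "t \<ge> 1" for t
  proof -
    have "w t \<noteq> 0" using wunit[OF that] by auto
    then have "0 < w t \<bullet> (\<Sigma>N *v w t)" using SN unfolding sym_pd_def by auto
    then show ?thesis unfolding qnorm_def by simp
  qed
  have qP: "qnorm \<Sigma>P v \<ge> 0" for v using SP unfolding qnorm_def sym_psd_def by simp
  have pi_pos: "mpm_pi a > 0" if "0 < a" "a < 1" for a
    using that unfolding mpm_pi_def by simp
  have step: "?Q (t+1) \<le> ?Q t" if t1: "t \<ge> 1" for t
  proof -
    define \<tau> where "\<tau> = mpm_pi (aP t)"
    define L where "L = lam ?mu \<Sigma>P \<Sigma>N \<tau> (w (t+1))"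
    have r: "0 < aP t" "aP t < 1" "0 < aN t" "aN t < 1" using a_range[OF t1] by auto
    have Bt: "qnorm \<Sigma>N (w t) > 0" using qpos t1 by auto
    have B1: "qnorm \<Sigma>N (w (t+1)) > 0" using qpos t1 by auto
    have eta: "lam ?mu \<Sigma>P \<Sigma>N \<tau> (w t) = mpm_pi (aN t)"
      using a_feas[OF t1] Bt unfolding lam_def \<tau>_def by (simp add: field_simps)
    have Lge: "L \<ge> mpm_pi (aN t)" using w_step[OF t1] eta unfolding L_def \<tau>_def by simp
    have etapos: "mpm_pi (aN t) > 0" using pi_pos r by auto
    have Lpos: "L > 0" using Lge etapos by linarith
    define b where "b = 1 / (1 + L\<^sup>2)"
    have b0: "0 < b" unfolding b_def by (simp add: add_pos_nonneg)
    have b1: "b < 1" unfolding b_def using Lpos by (simp add: divide_less_eq add_pos_nonneg)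
    have ne: "1 + L\<^sup>2 \<noteq> 0" by (metis add_pos_nonneg zero_le_power2 zero_less_one less_irrefl)
    have "(1 - b) / b = L\<^sup>2" unfolding b_def using ne by (simp add: field_simps add_pos_nonneg)
    then have pib: "mpm_pi b = L" unfolding mpm_pi_def using Lpos by simp
    have feas: "mpm_pi b * qnorm \<Sigma>N (w (t+1)) + mpm_pi (aP t) * qnorm \<Sigma>P (w (t+1)) = w (t+1) \<bullet> ?mu"
      using B1 unfolding pib L_def lam_def \<tau>_def by (simp add: field_simps)
    have Q1: "?Q (t+1) \<le> QF p \<beta> (aP t) b"
      using a_min[of "t+1" "aP t" b] feas r b0 b1 t1 by simp
    have "mpm_pi b \<ge> mpm_pi (aN t)" using pib Lge by simp
    then have "(1 - aN t) / aN t \<le> (1 - b) / b" unfolding mpm_pi_def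
      using r b0 b1 by simp
    then have "1 / aN t \<le> 1 / b" using r b0 by (simp add: diff_divide_distrib)
    then have "b \<le> aN t" using r b0 by (simp add: divide_le_cancel field_simps)
    then have "QF p \<beta> (aP t) b \<le> ?Q t" unfolding QF_def using r p
      by (intro divide_right_mono) (auto intro: mult_left_mono)
    with Q1 show ?thesis by linarith
  qed
  have nonneg: "?Q t \<ge> 0" if "t \<ge> 1" for t
    using a_range[OF that] p unfolding QF_def by (intro divide_nonneg_pos) auto
  define X where "X = (\<lambda>n. ?Q (Suc n))"
  have decX: "decseq X" unfolding X_def
    by (rule decseq_SucI) (use step in simp)
  have "X n \<le> X 0" for n using decX by (simp add: decseq_def)
  moreover have "X n \<ge> 0" for n unfolding X_def using nonneg by simp
  ultimately have "Bseq X" by (intro BseqI'[where K="X 0"]) auto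
  moreover have "monoseq X" using decX by (simp add: monoseq_def decseq_def)
  ultimately have "convergent X" by (rule Bseq_monoseq_convergent)
  then have "convergent ?Q" unfolding X_def using convergent_Suc_iff[of ?Q] by simp
  then show ?thesis using step by blast
qed

end
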